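(* Let $(\gamma_{1j},\gamma_{2j})$, $j=1,\ldots,n$, be independent (across $j$) pairs of possibly correlated Bernoulli random variables with $\mathbb{E}\gamma_{ij}=\pi_{ij}$, let $\eta=(\eta_1,\ldots,\eta_n)$ be i.i.d. Bernoulli$(1/2)$ variables independent of all $\gamma_{ij}$, and let $\boldsymbol{A}=(a_{ij})$ be a deterministic real $n\times n$ matrix. For $0<\tau\le 1/(4\|\boldsymbol{A}\|_2^2)$, $$ \mathbb{E}\Big[\exp\Big(\tau\sum_{i:\eta_i=1}\gamma_{1i}\sum_{j:\eta_j=0}a_{ij}^2\gamma_{2j}\Big)\,\Big|\,\eta\Big]\le\exp\Big(1.44\,\tau\sum_{i\ne j}a_{ij}^2\pi_{1i}\pi_{2j}\Big). $$
   Context: $\|\boldsymbol{A}\|_2$ denotes the operator norm of $\boldsymbol{A}$. *)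

theory Defs
  imports "HOL-Probability.Probability"
begin

end

theory Submission
  imports Defs
begin


lemma freeze:
  fixes h :: "'b \<times> 'b \<Rightarrow> real"
  assumes P: "prob_space M"
    and ind: "prob_space.indep_var M S X T Y"
    and hm: "h \<in> borel_measurable (S \<Otimes>\<^sub>M T)"
    and hb: "\<And>z. \<bar>h z\<bar> \<le> K"
  shows "(\<integral>\<omega>. h (X \<omega>, Y \<omega>) \<partial>M) = (\<integral>x. (\<integral>\<omega>. h (x, Y \<omega>) \<partial>M) \<partial>distr M S X)"
    and "integrable (distr M S X) (\<lambda>x. \<integral>\<omega>. h (x, Y \<omega>) \<partial>M)"
    and "(\<integral>\<omega>. h (X \<omega>, Y \<omega>) \<partial>M) = (\<integral>\<omega>. (\<integral>\<omega>'. h (X \<omega>, Y \<omega>') \<partial>M) \<partial>M)"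
    and "integrable M (\<lambda>\<omega>. \<integral>\<omega>'. h (X \<omega>, Y \<omega>') \<partial>M)"
proof -
  interpret prob_space M by fact
  have rX[measurable]: "X \<in> measurable M S" and rY[measurable]: "Y \<in> measurable M T"
    using ind indep_var_rv1 indep_var_rv2 by blast+
  have D: "distr M S X \<Otimes>\<^sub>M distr M T Y = distr M (S \<Otimes>\<^sub>M T) (\<lambda>x. (X x, Y x))"
    using ind indep_var_distribution_eq by blast
  interpret PX: prob_space "distr M S X" by (rule prob_space_distr) simp
  interpret PY: prob_space "distr M T Y" by (rule prob_space_distr) simp
  interpret PP: pair_prob_space "distr M S X" "distr M T Y" ..
  have hm': "h \<in> borel_measurable (distr M S X \<Otimes>\<^sub>M distr M T Y)"
    using hm measurable_cong_sets[OF sets_pair_measure_cong[OF sets_distr sets_distr] refl] by blast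
  have int: "integrable (distr M S X \<Otimes>\<^sub>M distr M T Y) h"
    by (rule PP.integrable_const_bound[where B=K]) (use hb hm' in auto)
  have inner: "(\<integral>y. h (x, y) \<partial>distr M T Y) = (\<integral>\<omega>. h (x, Y \<omega>) \<partial>M)" if "x \<in> space (distr M S X)" for x
  proof -
    have "(\<lambda>y. h (x, y)) \<in> borel_measurable T"
      using measurable_Pair2[OF hm] that by simp
    then show ?thesis using integral_distr[OF rY] by blast
  qed
  have "(\<integral>\<omega>. h (X \<omega>, Y \<omega>) \<partial>M) = (\<integral>z. h z \<partial>distr M (S \<Otimes>\<^sub>M T) (\<lambda>x. (X x, Y x)))"
    by (rule integral_distr[symmetric]) (use hm in simp_all)
  also have "\<dots> = (\<integral>z. h z \<partial>(distr M S X \<Otimes>\<^sub>M distr M T Y))" by (simp add: D)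
  also have "\<dots> = (\<integral>x. (\<integral>y. h (x, y) \<partial>distr M T Y) \<partial>distr M S X)"
    by (rule PP.integral_fst'[OF int, symmetric])
  also have "\<dots> = (\<integral>x. (\<integral>\<omega>. h (x, Y \<omega>) \<partial>M) \<partial>distr M S X)"
    by (rule Bochner_Integration.integral_cong[OF refl]) (rule inner)
  finally show EQ: "(\<integral>\<omega>. h (X \<omega>, Y \<omega>) \<partial>M) = (\<integral>x. (\<integral>\<omega>. h (x, Y \<omega>) \<partial>M) \<partial>distr M S X)" .
  have hm2: "(\<lambda>z. h (fst z, Y (snd z))) \<in> borel_measurable (S \<Otimes>\<^sub>M M)"
    by (rule measurable_compose[OF _ hm]) measurable
  have gm: "(\<lambda>x. \<integral>\<omega>. h (x, Y \<omega>) \<partial>M) \<in> borel_measurable S"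
    using borel_measurable_lebesgue_integral[of "\<lambda>x \<omega>. h (x, Y \<omega>)" S] hm2
    by (simp add: case_prod_beta')
  have I1: "integrable (distr M S X) (\<lambda>x. \<integral>\<omega>. h (x, Y \<omega>) \<partial>M)"
  proof -
    have "integrable (distr M S X) (\<lambda>x. \<integral>y. h (x, y) \<partial>distr M T Y)" by (rule PP.integrable_fst'[OF int])
    moreover have "integrable (distr M S X) (\<lambda>x. \<integral>y. h (x, y) \<partial>distr M T Y) \<longleftrightarrow> integrable (distr M S X) (\<lambda>x. \<integral>\<omega>. h (x, Y \<omega>) \<partial>M)"
      by (rule Bochner_Integration.integrable_cong[OF refl]) (rule inner)
    ultimately show ?thesis by simp
  qed
  then show "integrable (distr M S X) (\<lambda>x. \<integral>\<omega>. h (x, Y \<omega>) \<partial>M)" .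
  show "integrable M (\<lambda>\<omega>. \<integral>\<omega>'. h (X \<omega>, Y \<omega>') \<partial>M)"
    using I1 integrable_distr_eq[OF rX gm] by simp
  show "(\<integral>\<omega>. h (X \<omega>, Y \<omega>) \<partial>M) = (\<integral>\<omega>. (\<integral>\<omega>'. h (X \<omega>, Y \<omega>') \<partial>M) \<partial>M)"
    using EQ integral_distr[OF rX gm] by simp
qed


lemma mgf_bound:
  fixes Z :: "'i \<Rightarrow> 'a \<Rightarrow> real" and t :: "'i \<Rightarrow> real"
  assumes P: "prob_space M" and fin: "finite I"
    and ind: "prob_space.indep_vars M (\<lambda>_. borel) Z I"
    and bin: "\<And>i. i \<in> I \<Longrightarrow> \<forall>\<omega>\<in>space M. Z i \<omega> \<in> {0, 1}"
    and tb: "\<And>i. i \<in> I \<Longrightarrow> 0 \<le> t i \<and> t i \<le> L"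
    and lin: "\<And>u. 0 \<le> u \<Longrightarrow> u \<le> L \<Longrightarrow> exp u \<le> 1 + c * u"
  shows "(\<integral>\<omega>. exp (\<Sum>i\<in>I. t i * Z i \<omega>) \<partial>M) \<le> exp (c * (\<Sum>i\<in>I. prob_space.expectation M (Z i) * t i))"
proof -
  interpret prob_space M by fact
  have rv[measurable]: "Z i \<in> borel_measurable M" if "i \<in> I" for i
    using ind that by (auto simp: indep_vars_def)
  have ind2: "indep_vars (\<lambda>_. borel) (\<lambda>i \<omega>. exp (t i * Z i \<omega>)) I"
    by (rule indep_vars_compose2[OF ind]) measurable
  have intZ: "integrable M (Z i)" if "i \<in> I" for i
    by (rule integrable_const_bound[where B=1]) (use bin[OF that] that in \<open>auto intro!: AE_I2\<close>)
  have eq: "exp (t i * Z i \<omega>) = 1 + (exp (t i) - 1) * Z i \<omega>" if "i \<in> I" "\<omega> \<in> space M" for i \<omega>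
    using bin[OF that(1)] that(2) by auto
  have E: "(\<integral>\<omega>. exp (t i * Z i \<omega>) \<partial>M) = 1 + (exp (t i) - 1) * expectation (Z i)" if "i \<in> I" for i
  proof -
    have "(\<integral>\<omega>. exp (t i * Z i \<omega>) \<partial>M) = (\<integral>\<omega>. 1 + (exp (t i) - 1) * Z i \<omega> \<partial>M)"
      by (rule Bochner_Integration.integral_cong[OF refl]) (rule eq[OF that])
    also have "\<dots> = 1 + (exp (t i) - 1) * expectation (Z i)"
      using intZ[OF that] prob_space by simp
    finally show ?thesis .
  qed
  have pnn: "0 \<le> expectation (Z i)" if "i \<in> I" for i
    by (rule integral_nonneg_AE) (use bin[OF that] in \<open>auto intro!: AE_I2\<close>)
  have intE: "integrable M (\<lambda>\<omega>. exp (t i * Z i \<omega>))" if "i \<in> I" for i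
    by (rule integrable_const_bound[where B="exp (t i)"]) (use bin[OF that] that tb[OF that] in \<open>auto intro!: AE_I2\<close>)
  have "(\<integral>\<omega>. exp (\<Sum>i\<in>I. t i * Z i \<omega>) \<partial>M) = (\<integral>\<omega>. (\<Prod>i\<in>I. exp (t i * Z i \<omega>)) \<partial>M)"
    by (simp add: exp_sum fin)
  also have "\<dots> = (\<Prod>i\<in>I. \<integral>\<omega>. exp (t i * Z i \<omega>) \<partial>M)"
    by (rule indep_vars_lebesgue_integral[OF fin ind2 intE])
  also have "\<dots> = (\<Prod>i\<in>I. 1 + (exp (t i) - 1) * expectation (Z i))"
    by (rule prod.cong[OF refl]) (rule E)
  also have "\<dots> \<le> (\<Prod>i\<in>I. exp (c * (expectation (Z i) * t i)))"
  proof (rule prod_mono, safe)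
    fix i assume i: "i \<in> I"
    have "exp (t i) - 1 \<ge> 0" using tb[OF i] by simp
    then show "0 \<le> 1 + (exp (t i) - 1) * expectation (Z i)" using pnn[OF i] by simp
    have "(exp (t i) - 1) * expectation (Z i) \<le> (c * t i) * expectation (Z i)"
      using lin[of "t i"] tb[OF i] pnn[OF i] by (intro mult_right_mono) auto
    also have "\<dots> = c * (expectation (Z i) * t i)" by simp
    finally show "1 + (exp (t i) - 1) * expectation (Z i) \<le> exp (c * (expectation (Z i) * t i))"
      using exp_ge_add_one_self[of "c * (expectation (Z i) * t i)"] by linarith
  qed
  also have "\<dots> = exp (c * (\<Sum>i\<in>I. expectation (Z i) * t i))"
    by (simp add: exp_sum fin sum_distrib_left)
  finally show ?thesis .
qed


lemma exp_lin:
  fixes L c u :: real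
  assumes "exp L \<le> 1 + c * L" "0 < L" "0 \<le> u" "u \<le> L"
  shows "exp u \<le> 1 + c * u"
proof -
  define t where "t = u / L"
  have t: "0 \<le> t" "t \<le> 1" using assms by (auto simp: t_def field_simps)
  have u: "u = (1 - t) *\<^sub>R 0 + t *\<^sub>R L" using assms by (simp add: t_def)
  have "exp u \<le> (1 - t) * exp 0 + t * exp L"
    unfolding u by (rule convex_onD[OF exp_convex]) (use t in auto)
  also have "\<dots> \<le> (1 - t) + t * (1 + c * L)" using t assms by (simp add: mult_left_mono)
  also have "\<dots> = 1 + c * u" using assms by (simp add: t_def field_simps)
  finally show ?thesis .
qed

lemma exp_pow_bound:
  fixes x :: real
  assumes "0 \<le> x" "x \<le> 1"
  shows "exp (of_nat n * x) \<le> (1 + x + x\<^sup>2) ^ n"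
proof -
  have "exp (of_nat n * x) = exp x ^ n" by (rule exp_of_nat_mult)
  also have "\<dots> \<le> (1 + x + x\<^sup>2) ^ n" by (rule power_mono[OF exp_bound[OF assms]]) simp
  finally show ?thesis .
qed

lemma exp_quarter: "exp (1/4 :: real) \<le> 1 + 1.16 * (1/4)"
proof -
  have "exp (1/4 :: real) = exp (of_nat 32 * (1/128))" by simp
  also have "\<dots> \<le> (1 + 1/128 + (1/128)\<^sup>2) ^ 32" by (rule exp_pow_bound) auto
  also have "\<dots> \<le> 1 + 1.16 * (1/4)" by (simp add: power2_eq_square power_divide divide_le_eq)
  finally show ?thesis .
qed

lemma exp_029: "exp (0.29 :: real) \<le> 1 + 1.24 * 0.29"
proof -
  have "exp (0.29 :: real) = exp (of_nat 32 * (0.29/32))" by simp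
  also have "\<dots> \<le> (1 + 0.29/32 + (0.29/32)\<^sup>2) ^ 32" by (rule exp_pow_bound) auto
  also have "\<dots> \<le> 1 + 1.24 * 0.29" by (simp add: power2_eq_square power_divide divide_le_eq)
  finally show ?thesis .
qed


lemma row_bound:
  fixes A :: "real^'n^'n"
  shows "(\<Sum>j\<in>UNIV. (A$i$j)^2) \<le> (onorm (\<lambda>x. A *v x))^2"
proof -
  let ?N = "onorm (\<lambda>x. A *v x)"
  let ?r = "(\<Sum>j\<in>UNIV. (A$i$j)^2)"
  have bl: "bounded_linear (\<lambda>x. A *v x)" by simp
  have "?r = (A *v (A$i)) $ i" by (simp add: matrix_vector_mult_def power2_eq_square)
  also have "\<dots> \<le> norm (A *v (A$i))" using component_le_norm_cart abs_ge_self order_trans by metis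
  also have "\<dots> \<le> ?N * norm (A$i)" by (rule onorm[OF bl])
  finally have 1: "?r \<le> ?N * norm (A$i)" .
  have 2: "norm (A$i) = sqrt ?r" by (simp add: norm_eq_sqrt_inner inner_vec_def power2_eq_square)
  have N0: "0 \<le> ?N" by (rule onorm_pos_le[OF bl])
  have r0: "0 \<le> ?r" by (simp add: sum_nonneg)
  show ?thesis
  proof (cases "?r = 0")
    case True then show ?thesis by simp
  next
    case False
    then have sp: "sqrt ?r > 0" using r0 by simp
    have "sqrt ?r * sqrt ?r \<le> ?N * sqrt ?r" using 1 2 r0 by simp
    then have "sqrt ?r \<le> ?N" using sp by (meson mult_le_cancel_right_pos)
    then have "(sqrt ?r)^2 \<le> ?N^2" using sp by (intro power_mono) auto
    then show ?thesis using r0 by simp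
  qed
qed

lemma col_bound:
  fixes A :: "real^'n^'n"
  shows "(\<Sum>i\<in>UNIV. (A$i$j)^2) \<le> (onorm (\<lambda>x. A *v x))^2"
proof -
  let ?N = "onorm (\<lambda>x. A *v x)"
  have bl: "bounded_linear (\<lambda>x. A *v x)" by simp
  have c: "(A *v axis j 1) $ i = A$i$j" for i
    by (simp add: matrix_vector_mult_def axis_def if_distrib cong: if_cong)
  have "norm (A *v axis j 1) \<le> ?N * norm (axis j (1::real))" by (rule onorm[OF bl])
  then have n: "norm (A *v axis j 1) \<le> ?N" by simp
  have "(\<Sum>i\<in>UNIV. (A$i$j)^2) = (norm (A *v axis j 1))^2"
    by (simp add: norm_eq_sqrt_inner inner_vec_def power2_eq_square c sum_nonneg)
  also have "\<dots> \<le> ?N^2" using n by (intro power_mono) auto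
  finally show ?thesis .
qed

lemma allsets_count:
  "B \<in> sets (PiM (UNIV::'n::finite set) (\<lambda>_. count_space (UNIV::bool set)))"
proof -
  have fin: "finite B" by (rule finite_subset[OF subset_UNIV]) simp
  have e: "PiE UNIV (\<lambda>i. {s i}) = {s}" for s :: "'n \<Rightarrow> bool"
    by (rule set_eqI) (simp add: PiE_iff fun_eq_iff)
  have "B = (\<Union>s\<in>B. PiE UNIV (\<lambda>i. {s i}))" unfolding e by auto
  also have "\<dots> \<in> sets (PiM (UNIV::'n::finite set) (\<lambda>_. count_space (UNIV::bool set)))"
    using fin by (intro sets.finite_UN sets_PiM_I_finite) auto
  finally show ?thesis .
qed

lemma meas_count:
  assumes "\<And>x. f x \<in> space N"
  shows "f \<in> measurable (PiM (UNIV::'n::finite set) (\<lambda>_. count_space (UNIV::bool set))) N"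
  by (rule measurableI) (use assms allsets_count in auto)

lemma finite_sets_borelPi:
  assumes "finite E"
  shows "E \<in> sets (PiM (UNIV::'n::finite set) (\<lambda>_. (borel :: (real \<times> real) measure)))"
proof -
  have e: "PiE UNIV (\<lambda>i. {s i}) = {s}" for s :: "'n \<Rightarrow> real \<times> real"
    by (rule set_eqI) (simp add: PiE_iff fun_eq_iff)
  have "E = (\<Union>s\<in>E. PiE UNIV (\<lambda>i. {s i}))" unfolding e by auto
  also have "\<dots> \<in> sets (PiM (UNIV::'n::finite set) (\<lambda>_. (borel :: (real \<times> real) measure)))"
    using assms by (intro sets.finite_UN sets_PiM_I_finite) auto
  finally show ?thesis .
qed

lemma sum_filter_UNIV:
  fixes g :: "'n::finite \<Rightarrow> real"
  shows "(\<Sum>i\<in>{i. P i}. g i) = (\<Sum>i\<in>UNIV. (if P i then 1 else 0) * g i)"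
proof -
  have "(\<Sum>i\<in>{i. P i}. g i) = (\<Sum>i\<in>UNIV. if P i then g i else 0)"
    using sum.inter_filter[of UNIV g P] by simp
  also have "\<dots> = (\<Sum>i\<in>UNIV. (if P i then 1 else 0) * g i)" by (intro sum.cong) auto
  finally show ?thesis .
qed


lemma bil_bound:
  fixes b :: "'i \<Rightarrow> 'j \<Rightarrow> real"
  assumes b0: "\<And>i j. 0 \<le> b i j" and a: "\<And>i. 0 \<le> a i \<and> a i \<le> 1" and c: "\<And>j. 0 \<le> c j \<and> c j \<le> 1"
  shows "0 \<le> (\<Sum>i\<in>I. a i * (\<Sum>j\<in>J. b i j * c j)) \<and> (\<Sum>i\<in>I. a i * (\<Sum>j\<in>J. b i j * c j)) \<le> (\<Sum>i\<in>I. \<Sum>j\<in>J. b i j)"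
proof
  have inner: "0 \<le> (\<Sum>j\<in>J. b i j * c j) \<and> (\<Sum>j\<in>J. b i j * c j) \<le> (\<Sum>j\<in>J. b i j)" for i
  proof
    show "0 \<le> (\<Sum>j\<in>J. b i j * c j)" using b0 c by (intro sum_nonneg) simp
    show "(\<Sum>j\<in>J. b i j * c j) \<le> (\<Sum>j\<in>J. b i j)"
      using b0 c by (intro sum_mono) (simp add: mult_left_le)
  qed
  show "0 \<le> (\<Sum>i\<in>I. a i * (\<Sum>j\<in>J. b i j * c j))" using a inner by (intro sum_nonneg) simp
  show "(\<Sum>i\<in>I. a i * (\<Sum>j\<in>J. b i j * c j)) \<le> (\<Sum>i\<in>I. \<Sum>j\<in>J. b i j)"
  proof (rule sum_mono)
    fix i
    show "a i * (\<Sum>j\<in>J. b i j * c j) \<le> (\<Sum>j\<in>J. b i j)"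
      using a[of i] inner[of i] by (meson mult_left_le_one_le order_trans)
  qed
qed

theorem lemma5:
  fixes M :: "'a measure"
    and A :: "real ^ 'n ^ 'n"
    and \<gamma>1 \<gamma>2 :: "'n \<Rightarrow> 'a \<Rightarrow> real"
    and \<pi>1 \<pi>2 :: "'n \<Rightarrow> real"
    and \<eta> :: "'n \<Rightarrow> 'a \<Rightarrow> bool"
    and \<tau> :: real
  assumes "prob_space M"
    and rv1: "\<And>j. \<gamma>1 j \<in> borel_measurable M"
    and rv2: "\<And>j. \<gamma>2 j \<in> borel_measurable M"
    and bern1: "\<And>j. \<forall>\<omega>\<in>space M. \<gamma>1 j \<omega> \<in> {0, 1}"
    and bern2: "\<And>j. \<forall>\<omega>\<in>space M. \<gamma>2 j \<omega> \<in> {0, 1}"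
    and mean1: "\<And>j. prob_space.expectation M (\<gamma>1 j) = \<pi>1 j"
    and mean2: "\<And>j. prob_space.expectation M (\<gamma>2 j) = \<pi>2 j"
    and indep_pairs: "prob_space.indep_vars M (\<lambda>_. borel) (\<lambda>j \<omega>. (\<gamma>1 j \<omega>, \<gamma>2 j \<omega>)) UNIV"
    and rv_eta: "\<And>i. \<eta> i \<in> measurable M (count_space UNIV)"
    and eta_half: "\<And>i. measure M {\<omega> \<in> space M. \<eta> i \<omega>} = 1/2"
    and indep_eta: "prob_space.indep_vars M (\<lambda>_. count_space UNIV) \<eta> UNIV"
    and indep_eta_gamma: "prob_space.indep_set M
          (sets (vimage_algebra (space M) (\<lambda>\<omega> i. \<eta> i \<omega>) (PiM UNIV (\<lambda>_. count_space UNIV))))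
          (sets (vimage_algebra (space M) (\<lambda>\<omega> j. (\<gamma>1 j \<omega>, \<gamma>2 j \<omega>)) (PiM UNIV (\<lambda>_. borel))))"
    and tau_pos: "0 < \<tau>"
    and tau_le: "4 * \<tau> * (onorm (\<lambda>x. A *v x))\<^sup>2 \<le> 1"
  shows "AE \<omega> in M.
    real_cond_exp M
      (vimage_algebra (space M) (\<lambda>\<omega> i. \<eta> i \<omega>) (PiM UNIV (\<lambda>_. count_space UNIV)))
      (\<lambda>\<omega>. exp (\<tau> * (\<Sum>i\<in>{i. \<eta> i \<omega>}. \<gamma>1 i \<omega> *
                   (\<Sum>j\<in>{j. \<not> \<eta> j \<omega>}. (A $ i $ j)\<^sup>2 * \<gamma>2 j \<omega>)))) \<omega>
    \<le> exp (1.44 * \<tau> * (\<Sum>i\<in>UNIV. \<Sum>j\<in>UNIV - {i}. (A $ i $ j)\<^sup>2 * \<pi>1 i * \<pi>2 j))"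
proof -
  interpret prob_space M by fact
  define b where "b i j = (A $ i $ j)\<^sup>2" for i j
  define cl :: "real \<Rightarrow> real" where "cl x = max 0 (min 1 x)" for x
  define W where "W = (\<lambda>\<omega> i. \<eta> i \<omega>)"
  define enc :: "('n \<Rightarrow> bool) \<Rightarrow> 'n \<Rightarrow> real \<times> real" where "enc s = (\<lambda>i. (if s i then 1 else 0, 0))" for s
  define \<Gamma> where "\<Gamma> = (\<lambda>\<omega> j. (\<gamma>1 j \<omega>, \<gamma>2 j \<omega>))"
  define F :: "('n \<Rightarrow> real \<times> real) \<times> ('n \<Rightarrow> real \<times> real) \<Rightarrow> real" where
    "F z = exp (\<tau> * (\<Sum>i\<in>UNIV. cl (fst (fst z i)) * cl (fst (snd z i)) *
       (\<Sum>j\<in>UNIV. (1 - cl (fst (fst z j))) * b i j * cl (snd (snd z j)))))" for z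
  define f where "f = (\<lambda>\<omega>. exp (\<tau> * (\<Sum>i\<in>{i. \<eta> i \<omega>}. \<gamma>1 i \<omega> *
                   (\<Sum>j\<in>{j. \<not> \<eta> j \<omega>}. (A $ i $ j)\<^sup>2 * \<gamma>2 j \<omega>))))"
  define G where "G = vimage_algebra (space M) W (PiM UNIV (\<lambda>_. count_space UNIV))"
  define \<phi> where "\<phi> s = (\<integral>\<omega>. F (enc s, \<Gamma> \<omega>) \<partial>M)" for s
  define C where "C = exp (1.44 * \<tau> * (\<Sum>i\<in>UNIV. \<Sum>j\<in>UNIV - {i}. (A $ i $ j)\<^sup>2 * \<pi>1 i * \<pi>2 j))"
  define Bd where "Bd = exp (\<tau> * (\<Sum>i\<in>UNIV. \<Sum>j\<in>UNIV. b i j))"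
  define PB :: "('n \<Rightarrow> real \<times> real) measure" where "PB = PiM UNIV (\<lambda>_. borel)"

  have b0: "0 \<le> b i j" for i j by (simp add: b_def)
  have cl01: "0 \<le> cl x" "cl x \<le> 1" for x by (auto simp: cl_def)
  have W_meas[measurable]: "W \<in> measurable M (PiM UNIV (\<lambda>_. count_space UNIV))"
  proof -
    have "(\<lambda>\<omega>. \<lambda>i\<in>UNIV. \<eta> i \<omega>) \<in> measurable M (PiM UNIV (\<lambda>_. count_space UNIV))"
      by (rule measurable_restrict) (rule rv_eta)
    then show ?thesis by (simp add: W_def restrict_UNIV)
  qed
  have enc_meas[measurable]: "enc \<in> measurable (PiM UNIV (\<lambda>_. count_space UNIV)) PB"
    by (rule meas_count) (simp add: PB_def space_PiM PiE_UNIV_domain)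
  have Gamma_meas[measurable]: "\<Gamma> \<in> measurable M PB"
  proof -
    have "(\<lambda>\<omega>. \<lambda>j\<in>UNIV. (\<gamma>1 j \<omega>, \<gamma>2 j \<omega>)) \<in> measurable M PB"
      unfolding PB_def by (rule measurable_restrict) (use rv1 rv2 in measurable)
    then show ?thesis by (simp add: \<Gamma>_def restrict_UNIV)
  qed
  have F_meas[measurable]: "F \<in> borel_measurable (PB \<Otimes>\<^sub>M PB)"
  proof -
    define p1 where "p1 i z = fst (fst z i)" for i and z :: "('n \<Rightarrow> real \<times> real) \<times> ('n \<Rightarrow> real \<times> real)"
    define p2 where "p2 i z = fst (snd z i)" for i and z :: "('n \<Rightarrow> real \<times> real) \<times> ('n \<Rightarrow> real \<times> real)"
    define p3 where "p3 i z = snd (snd z i)" for i and z :: "('n \<Rightarrow> real \<times> real) \<times> ('n \<Rightarrow> real \<times> real)"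
    have c1: "(\<lambda>z. fst z i) \<in> measurable (PB \<Otimes>\<^sub>M PB) (borel :: (real \<times> real) measure)" for i
      unfolding PB_def by (rule measurable_compose[OF measurable_fst measurable_component_singleton]) simp
    have c2: "(\<lambda>z. snd z i) \<in> measurable (PB \<Otimes>\<^sub>M PB) (borel :: (real \<times> real) measure)" for i
      unfolding PB_def by (rule measurable_compose[OF measurable_snd measurable_component_singleton]) simp
    have [measurable]: "p1 i \<in> borel_measurable (PB \<Otimes>\<^sub>M PB)" for i
      unfolding p1_def[abs_def] by (rule borel_measurable_continuous_on[where f=fst, OF _ c1]) (intro continuous_intros)
    have [measurable]: "p2 i \<in> borel_measurable (PB \<Otimes>\<^sub>M PB)" for i
      unfolding p2_def[abs_def] by (rule borel_measurable_continuous_on[where f=fst, OF _ c2]) (intro continuous_intros)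
    have [measurable]: "p3 i \<in> borel_measurable (PB \<Otimes>\<^sub>M PB)" for i
      unfolding p3_def[abs_def] by (rule borel_measurable_continuous_on[where f=snd, OF _ c2]) (intro continuous_intros)
    have "F = (\<lambda>z. exp (\<tau> * (\<Sum>i\<in>UNIV. max 0 (min 1 (p1 i z)) * max 0 (min 1 (p2 i z)) *
       (\<Sum>j\<in>UNIV. (1 - max 0 (min 1 (p1 j z))) * b i j * max 0 (min 1 (p3 j z))))))"
      by (simp add: F_def[abs_def] cl_def p1_def p2_def p3_def)
    also have "\<dots> \<in> borel_measurable (PB \<Otimes>\<^sub>M PB)" by measurable
    finally show ?thesis .
  qed
  have F_bd: "0 \<le> F z \<and> F z \<le> Bd" for z
  proof -
    have inner: "0 \<le> (\<Sum>j\<in>UNIV. (1 - cl (fst (fst z j))) * b i j * cl (snd (snd z j)))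
       \<and> (\<Sum>j\<in>UNIV. (1 - cl (fst (fst z j))) * b i j * cl (snd (snd z j))) \<le> (\<Sum>j\<in>UNIV. b i j)" for i
    proof
      show "0 \<le> (\<Sum>j\<in>UNIV. (1 - cl (fst (fst z j))) * b i j * cl (snd (snd z j)))"
        using cl01 b0 by (intro sum_nonneg mult_nonneg_nonneg) auto
      show "(\<Sum>j\<in>UNIV. (1 - cl (fst (fst z j))) * b i j * cl (snd (snd z j))) \<le> (\<Sum>j\<in>UNIV. b i j)"
      proof (rule sum_mono)
        fix j
        have "(1 - cl (fst (fst z j))) * b i j \<le> 1 * b i j"
          using cl01 b0 by (intro mult_right_mono) auto
        then have "(1 - cl (fst (fst z j))) * b i j * cl (snd (snd z j)) \<le> b i j * 1"
          using cl01 b0 cl01[of "fst (fst z j)"] by (intro mult_mono) auto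
        then show "(1 - cl (fst (fst z j))) * b i j * cl (snd (snd z j)) \<le> b i j" by simp
      qed
    qed
    have outer: "(\<Sum>i\<in>UNIV. cl (fst (fst z i)) * cl (fst (snd z i)) *
       (\<Sum>j\<in>UNIV. (1 - cl (fst (fst z j))) * b i j * cl (snd (snd z j)))) \<le> (\<Sum>i\<in>UNIV. \<Sum>j\<in>UNIV. b i j)"
    proof (rule sum_mono)
      fix i
      have "cl (fst (fst z i)) * cl (fst (snd z i)) \<le> 1" using cl01 by (intro mult_le_one) auto
      then show "cl (fst (fst z i)) * cl (fst (snd z i)) *
       (\<Sum>j\<in>UNIV. (1 - cl (fst (fst z j))) * b i j * cl (snd (snd z j))) \<le> (\<Sum>j\<in>UNIV. b i j)"
        using inner[of i] cl01 mult_right_mono[of "cl (fst (fst z i)) * cl (fst (snd z i))" 1] by fastforce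
    qed
    show ?thesis unfolding F_def Bd_def using outer tau_pos by (simp add: mult_left_mono)
  qed
  have FEQ: "f \<omega> = F (enc (W \<omega>), \<Gamma> \<omega>)" if "\<omega> \<in> space M" for \<omega>
  proof -
    have g1: "cl (\<gamma>1 i \<omega>) = \<gamma>1 i \<omega>" for i using bern1[of i] that by (auto simp: cl_def)
    have g2: "cl (\<gamma>2 i \<omega>) = \<gamma>2 i \<omega>" for i using bern2[of i] that by (auto simp: cl_def)
    have e1: "cl (if P then 1 else 0) = (if P then 1 else 0)" for P by (simp add: cl_def)
    have e2: "1 - (if P then 1 else 0) = (if \<not> P then 1 else (0::real))" for P by simp
    show ?thesis
      unfolding f_def F_def enc_def W_def \<Gamma>_def
      by (simp add: g1 g2 e1 e2 sum_filter_UNIV b_def mult.assoc del: if_not_P if_P)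
  qed
  have INDEP: "indep_var PB (\<lambda>\<omega>. enc (W \<omega>)) PB \<Gamma>"
    unfolding indep_var_eq
  proof (intro conjI)
    show "random_variable PB (\<lambda>\<omega>. enc (W \<omega>))" by measurable
    show "random_variable PB \<Gamma>" by measurable
    have s1: "sigma_sets (space M) {(\<lambda>\<omega>. enc (W \<omega>)) -` E \<inter> space M |E. E \<in> sets PB} \<subseteq> sets G"
    proof -
      have "{(\<lambda>\<omega>. enc (W \<omega>)) -` E \<inter> space M |E. E \<in> sets PB} \<subseteq> sets G"
      proof safe
        fix E assume "E \<in> sets PB"
        have "(\<lambda>\<omega>. enc (W \<omega>)) -` E \<inter> space M = W -` (enc -` E) \<inter> space M" by auto
        also have "\<dots> \<in> sets G" unfolding G_def by (rule in_vimage_algebra) (rule allsets_count)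
        finally show "(\<lambda>\<omega>. enc (W \<omega>)) -` E \<inter> space M \<in> sets G" .
      qed
      from sets.sigma_sets_subset[OF this] show ?thesis by (simp add: G_def)
    qed
    have s2: "sigma_sets (space M) {\<Gamma> -` E \<inter> space M |E. E \<in> sets PB} \<subseteq>
       sets (vimage_algebra (space M) (\<lambda>\<omega> j. (\<gamma>1 j \<omega>, \<gamma>2 j \<omega>)) (PiM UNIV (\<lambda>_. borel)))"
      by (simp add: sets_vimage_algebra \<Gamma>_def PB_def)
    show "indep_set (sigma_sets (space M) {(\<lambda>\<omega>. enc (W \<omega>)) -` E \<inter> space M |E. E \<in> sets PB})
        (sigma_sets (space M) {\<Gamma> -` E \<inter> space M |E. E \<in> sets PB})"
      using indep_eta_gamma unfolding indep_set_def
      by (rule indep_sets_mono_sets) (use s1 s2 in \<open>auto simp: G_def W_def split: bool.split\<close>)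
  qed
  have p1: "0 \<le> \<pi>1 i \<and> \<pi>1 i \<le> 1" for i
  proof -
    have int: "integrable M (\<gamma>1 i)"
      by (rule integrable_const_bound[where B=1]) (use bern1[of i] rv1[of i] in \<open>auto intro!: AE_I2\<close>)
    have "0 \<le> expectation (\<gamma>1 i)" by (rule integral_nonneg_AE) (use bern1[of i] in \<open>auto intro!: AE_I2\<close>)
    moreover have "expectation (\<gamma>1 i) \<le> expectation (\<lambda>_. 1)"
      by (rule integral_mono_AE) (use int bern1[of i] in \<open>auto intro!: AE_I2\<close>)
    ultimately show ?thesis using mean1[of i] prob_space by simp
  qed
  have p2: "0 \<le> \<pi>2 i \<and> \<pi>2 i \<le> 1" for i
  proof -
    have int: "integrable M (\<gamma>2 i)"
      by (rule integrable_const_bound[where B=1]) (use bern2[of i] rv2[of i] in \<open>auto intro!: AE_I2\<close>)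
    have "0 \<le> expectation (\<gamma>2 i)" by (rule integral_nonneg_AE) (use bern2[of i] in \<open>auto intro!: AE_I2\<close>)
    moreover have "expectation (\<gamma>2 i) \<le> expectation (\<lambda>_. 1)"
      by (rule integral_mono_AE) (use int bern2[of i] in \<open>auto intro!: AE_I2\<close>)
    ultimately show ?thesis using mean2[of i] prob_space by simp
  qed
  have ON: "\<tau> * (onorm (\<lambda>x. A *v x))\<^sup>2 \<le> 1/4" using tau_le by simp
  have rowb: "\<tau> * (\<Sum>j\<in>J. b i j) \<le> 1/4" for i J
  proof -
    have "(\<Sum>j\<in>J. b i j) \<le> (\<Sum>j\<in>UNIV. b i j)" using b0 by (intro sum_mono2) auto
    also have "\<dots> \<le> (onorm (\<lambda>x. A *v x))\<^sup>2" unfolding b_def by (rule row_bound)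
    finally show ?thesis using ON tau_pos by (meson mult_left_mono less_imp_le order_trans)
  qed
  have colb: "\<tau> * (\<Sum>i\<in>J. b i j) \<le> 1/4" for j J
  proof -
    have "(\<Sum>i\<in>J. b i j) \<le> (\<Sum>i\<in>UNIV. b i j)" using b0 by (intro sum_mono2) auto
    also have "\<dots> \<le> (onorm (\<lambda>x. A *v x))\<^sup>2" unfolding b_def by (rule col_bound)
    finally show ?thesis using ON tau_pos by (meson mult_left_mono less_imp_le order_trans)
  qed
  have indg1: "indep_vars (\<lambda>_. borel) \<gamma>1 J" for J
  proof -
    have "indep_vars (\<lambda>_. borel) (\<lambda>i x. fst (\<gamma>1 i x, \<gamma>2 i x)) UNIV"
      by (rule indep_vars_compose2[OF indep_pairs]) (intro borel_measurable_continuous_onI continuous_intros)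
    then have "indep_vars (\<lambda>_. borel) \<gamma>1 UNIV" by simp
    then show ?thesis by (rule indep_vars_subset) simp
  qed
  have indg2: "indep_vars (\<lambda>_. borel) \<gamma>2 J" for J
  proof -
    have "indep_vars (\<lambda>_. borel) (\<lambda>i x. snd (\<gamma>1 i x, \<gamma>2 i x)) UNIV"
      by (rule indep_vars_compose2[OF indep_pairs]) (intro borel_measurable_continuous_onI continuous_intros)
    then have "indep_vars (\<lambda>_. borel) \<gamma>2 UNIV" by simp
    then show ?thesis by (rule indep_vars_subset) simp
  qed
  have KEY: "\<phi> s \<le> C" for s
  proof -
    define S where "S = {i. s i}"
    define T where "T = {j. \<not> s j}"
    define PS :: "('n \<Rightarrow> real \<times> real) measure" where "PS = PiM S (\<lambda>_. borel)"
    define PT :: "('n \<Rightarrow> real \<times> real) measure" where "PT = PiM T (\<lambda>_. borel)"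
    define X where "X = (\<lambda>\<omega>. restrict (\<lambda>i. (\<gamma>1 i \<omega>, \<gamma>2 i \<omega>)) T)"
    define Y where "Y = (\<lambda>\<omega>. restrict (\<lambda>i. (\<gamma>1 i \<omega>, \<gamma>2 i \<omega>)) S)"
    have IND: "indep_var PT X PS Y"
      unfolding PT_def PS_def X_def Y_def
      by (rule indep_var_restrict[OF indep_pairs]) (auto simp: S_def T_def)
    define q1 where "q1 i z = (if i \<in> S then fst (snd z i) else 0)" for i and z :: "('n \<Rightarrow> real \<times> real) \<times> ('n \<Rightarrow> real \<times> real)"
    define q2 where "q2 j z = (if j \<in> T then snd (fst z j) else 0)" for j and z :: "('n \<Rightarrow> real \<times> real) \<times> ('n \<Rightarrow> real \<times> real)"
    have [measurable]: "q1 i \<in> borel_measurable (PT \<Otimes>\<^sub>M PS)" for i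
    proof (cases "i \<in> S")
      case True
      have c: "(\<lambda>z. snd z i) \<in> measurable (PT \<Otimes>\<^sub>M PS) (borel :: (real \<times> real) measure)"
        unfolding PS_def by (rule measurable_compose[OF measurable_snd measurable_component_singleton]) (simp add: True)
      have "(\<lambda>z. fst (snd z i)) \<in> borel_measurable (PT \<Otimes>\<^sub>M PS)"
        by (rule borel_measurable_continuous_on[where f=fst, OF _ c]) (intro continuous_intros)
      then show ?thesis using True by (simp add: q1_def[abs_def])
    qed (simp add: q1_def[abs_def])
    have [measurable]: "q2 i \<in> borel_measurable (PT \<Otimes>\<^sub>M PS)" for i
    proof (cases "i \<in> T")
      case True
      have c: "(\<lambda>z. fst z i) \<in> measurable (PT \<Otimes>\<^sub>M PS) (borel :: (real \<times> real) measure)"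
        unfolding PT_def by (rule measurable_compose[OF measurable_fst measurable_component_singleton]) (simp add: True)
      have "(\<lambda>z. snd (fst z i)) \<in> borel_measurable (PT \<Otimes>\<^sub>M PS)"
        by (rule borel_measurable_continuous_on[where f=snd, OF _ c]) (intro continuous_intros)
      then show ?thesis using True by (simp add: q2_def[abs_def])
    qed (simp add: q2_def[abs_def])
    define h2 where "h2 z = exp (\<tau> * (\<Sum>i\<in>S. cl (q1 i z) * (\<Sum>j\<in>T. b i j * cl (q2 j z))))" for z
    have h2m: "h2 \<in> borel_measurable (PT \<Otimes>\<^sub>M PS)"
    proof -
      have "h2 = (\<lambda>z. exp (\<tau> * (\<Sum>i\<in>S. max 0 (min 1 (q1 i z)) * (\<Sum>j\<in>T. b i j * max 0 (min 1 (q2 j z))))))"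
        by (simp add: h2_def[abs_def] cl_def)
      also have "\<dots> \<in> borel_measurable (PT \<Otimes>\<^sub>M PS)" by measurable
      finally show ?thesis .
    qed
    have h2b: "\<bar>h2 z\<bar> \<le> exp (\<tau> * (\<Sum>i\<in>S. \<Sum>j\<in>T. b i j))" for z
    proof -
      have "(\<Sum>i\<in>S. cl (q1 i z) * (\<Sum>j\<in>T. b i j * cl (q2 j z))) \<le> (\<Sum>i\<in>S. \<Sum>j\<in>T. b i j)"
        using bil_bound[where b=b and a="\<lambda>i. cl (q1 i z)" and c="\<lambda>j. cl (q2 j z)" and I=S and J=T] b0 cl01 by blast
      then show ?thesis unfolding h2_def using tau_pos by (simp add: mult_left_mono)
    qed
    have h2eval: "h2 (X \<omega>, Y \<omega>') = exp (\<tau> * (\<Sum>i\<in>S. cl (\<gamma>1 i \<omega>') * (\<Sum>j\<in>T. b i j * cl (\<gamma>2 j \<omega>))))" for \<omega> \<omega>'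
      unfolding h2_def q1_def q2_def X_def Y_def by (simp cong: sum.cong)
    have e1: "cl (if P then 1 else 0) = (if P then 1 else 0)" for P by (simp add: cl_def)
    have e2: "1 - (if P then 1 else 0) = (if \<not> P then 1 else (0::real))" for P by simp
    have phiEq: "\<phi> s = (\<integral>\<omega>. h2 (X \<omega>, Y \<omega>) \<partial>M)"
      unfolding \<phi>_def
    proof (rule Bochner_Integration.integral_cong[OF refl])
      fix \<omega>
      have "F (enc s, \<Gamma> \<omega>) = exp (\<tau> * (\<Sum>i\<in>S. cl (\<gamma>1 i \<omega>) * (\<Sum>j\<in>T. b i j * cl (\<gamma>2 j \<omega>))))"
        unfolding F_def enc_def \<Gamma>_def S_def T_def
        by (simp add: e1 e2 sum_filter_UNIV mult.assoc del: if_not_P if_P)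
      then show "F (enc s, \<Gamma> \<omega>) = h2 (X \<omega>, Y \<omega>)" by (simp add: h2eval)
    qed
    define c where "c \<omega> i = (\<Sum>j\<in>T. b i j * cl (\<gamma>2 j \<omega>))" for \<omega> i
    define H where "H \<omega> = exp (1.16 * \<tau> * (\<Sum>i\<in>S. \<pi>1 i * c \<omega> i))" for \<omega>
    have c0: "0 \<le> c \<omega> i" for \<omega> i unfolding c_def using b0 cl01 by (intro sum_nonneg mult_nonneg_nonneg) auto
    have cb: "\<tau> * c \<omega> i \<le> 1/4" for \<omega> i
    proof -
      have "c \<omega> i \<le> (\<Sum>j\<in>T. b i j)" unfolding c_def using b0 cl01 by (intro sum_mono) (simp add: mult_left_le)
      then have "\<tau> * c \<omega> i \<le> \<tau> * (\<Sum>j\<in>T. b i j)" using tau_pos by (simp add: mult_left_mono)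
      then show ?thesis using rowb[of i T] by simp
    qed
    have lin1: "exp u \<le> 1 + 1.16 * u" if "0 \<le> u" "u \<le> 1/4" for u :: real
      by (rule exp_lin[OF exp_quarter]) (use that in auto)
    have lin2: "exp u \<le> 1 + 1.24 * u" if "0 \<le> u" "u \<le> 0.29" for u :: real
      by (rule exp_lin[OF exp_029]) (use that in auto)
    have inner: "(\<integral>\<omega>'. h2 (X \<omega>, Y \<omega>') \<partial>M) \<le> H \<omega>" for \<omega>
    proof -
      have "(\<integral>\<omega>'. h2 (X \<omega>, Y \<omega>') \<partial>M) = (\<integral>\<omega>'. exp (\<Sum>i\<in>S. (\<tau> * c \<omega> i) * \<gamma>1 i \<omega>') \<partial>M)"
      proof (rule Bochner_Integration.integral_cong[OF refl])
        fix \<omega>' assume w: "\<omega>' \<in> space M"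
        have g1: "cl (\<gamma>1 i \<omega>') = \<gamma>1 i \<omega>'" for i using bern1[of i] w by (auto simp: cl_def)
        show "h2 (X \<omega>, Y \<omega>') = exp (\<Sum>i\<in>S. (\<tau> * c \<omega> i) * \<gamma>1 i \<omega>')"
          by (simp add: h2eval g1 c_def sum_distrib_left mult_ac)
      qed
      also have "\<dots> \<le> exp (1.16 * (\<Sum>i\<in>S. expectation (\<gamma>1 i) * (\<tau> * c \<omega> i)))"
        by (rule mgf_bound[OF prob_space_axioms _ indg1, where L="1/4"])
           (use bern1 cb c0 tau_pos lin1 in auto)
      also have "\<dots> = H \<omega>"
        by (simp add: H_def mean1 sum_distrib_left mult_ac)
      finally show ?thesis .
    qed
    have Hm: "H \<in> borel_measurable M"
      unfolding H_def[abs_def] c_def cl_def by (use rv2 in measurable)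
    have Hint: "integrable M H"
    proof (rule integrable_const_bound[where B="exp (1.16 * \<tau> * (\<Sum>i\<in>S. \<Sum>j\<in>T. b i j))"])
      show "AE x in M. norm (H x) \<le> exp (1.16 * \<tau> * (\<Sum>i\<in>S. \<Sum>j\<in>T. b i j))"
      proof (rule AE_I2)
        fix x
        have "(\<Sum>i\<in>S. \<pi>1 i * c x i) \<le> (\<Sum>i\<in>S. \<Sum>j\<in>T. b i j)"
          unfolding c_def using bil_bound[where b=b and a=\<pi>1 and c="\<lambda>j. cl (\<gamma>2 j x)" and I=S and J=T] b0 cl01 p1 by blast
        then show "norm (H x) \<le> exp (1.16 * \<tau> * (\<Sum>i\<in>S. \<Sum>j\<in>T. b i j))"
          unfolding H_def using tau_pos by (simp add: mult_left_mono)
      qed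
    qed (rule Hm)
    define d where "d j = 1.16 * \<tau> * (\<Sum>i\<in>S. \<pi>1 i * b i j)" for j
    have d0: "0 \<le> d j" for j unfolding d_def using p1 b0 tau_pos by (intro mult_nonneg_nonneg sum_nonneg) auto
    have db: "d j \<le> 0.29" for j
    proof -
      have "(\<Sum>i\<in>S. \<pi>1 i * b i j) \<le> (\<Sum>i\<in>S. b i j)" using p1 b0 by (intro sum_mono) (simp add: mult_left_le_one_le)
      then have "\<tau> * (\<Sum>i\<in>S. \<pi>1 i * b i j) \<le> 1/4" using colb[of j S] tau_pos
        by (meson mult_left_mono less_imp_le order_trans)
      then show ?thesis unfolding d_def by simp
    qed
    have "\<phi> s = (\<integral>\<omega>. (\<integral>\<omega>'. h2 (X \<omega>, Y \<omega>') \<partial>M) \<partial>M)"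
      unfolding phiEq by (rule freeze(3)[OF prob_space_axioms IND h2m h2b])
    also have "\<dots> \<le> (\<integral>\<omega>. H \<omega> \<partial>M)"
      by (rule integral_mono[OF freeze(4)[OF prob_space_axioms IND h2m h2b] Hint inner])
    also have "\<dots> = (\<integral>\<omega>. exp (\<Sum>j\<in>T. d j * \<gamma>2 j \<omega>) \<partial>M)"
    proof (rule Bochner_Integration.integral_cong[OF refl])
      fix \<omega> assume w: "\<omega> \<in> space M"
      have g2: "cl (\<gamma>2 i \<omega>) = \<gamma>2 i \<omega>" for i using bern2[of i] w by (auto simp: cl_def)
      have "1.16 * \<tau> * (\<Sum>i\<in>S. \<pi>1 i * c \<omega> i) = (\<Sum>i\<in>S. \<Sum>j\<in>T. 1.16 * \<tau> * \<pi>1 i * b i j * \<gamma>2 j \<omega>)"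
        by (simp add: c_def g2 sum_distrib_left sum_divide_distrib mult_ac)
      also have "\<dots> = (\<Sum>j\<in>T. \<Sum>i\<in>S. 1.16 * \<tau> * \<pi>1 i * b i j * \<gamma>2 j \<omega>)" by (rule sum.swap)
      also have "\<dots> = (\<Sum>j\<in>T. d j * \<gamma>2 j \<omega>)"
        by (simp add: d_def sum_distrib_left sum_distrib_right sum_divide_distrib mult_ac)
      finally show "H \<omega> = exp (\<Sum>j\<in>T. d j * \<gamma>2 j \<omega>)" by (simp add: H_def)
    qed
    also have "\<dots> \<le> exp (1.24 * (\<Sum>j\<in>T. expectation (\<gamma>2 j) * d j))"
      by (rule mgf_bound[OF prob_space_axioms _ indg2, where L="0.29"])
         (use bern2 d0 db lin2 in auto)
    also have "\<dots> \<le> C"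
    proof -
      define Q where "Q = (\<Sum>i\<in>S. \<Sum>j\<in>T. b i j * \<pi>1 i * \<pi>2 j)"
      define R where "R = (\<Sum>i\<in>UNIV. \<Sum>j\<in>UNIV - {i}. b i j * \<pi>1 i * \<pi>2 j)"
      have nn: "0 \<le> b i j * \<pi>1 i * \<pi>2 j" for i j using b0 p1 p2 by simp
      have Q0: "0 \<le> Q" unfolding Q_def using nn by (intro sum_nonneg) auto
      have "1.24 * (\<Sum>j\<in>T. expectation (\<gamma>2 j) * d j) = 1.24 * 1.16 * \<tau> * (\<Sum>j\<in>T. \<Sum>i\<in>S. b i j * \<pi>1 i * \<pi>2 j)"
        by (simp add: mean2 d_def sum_distrib_left sum_divide_distrib mult_ac)
      also have "\<dots> = 1.24 * 1.16 * \<tau> * Q" unfolding Q_def by (simp add: sum.swap[of _ T S])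
      also have "\<dots> \<le> 1.44 * \<tau> * Q" using Q0 tau_pos by (intro mult_right_mono) auto
      also have "Q \<le> R"
      proof -
        have "Q \<le> (\<Sum>i\<in>S. \<Sum>j\<in>UNIV - {i}. b i j * \<pi>1 i * \<pi>2 j)"
          unfolding Q_def by (intro sum_mono sum_mono2) (use nn in \<open>auto simp: S_def T_def\<close>)
        also have "\<dots> \<le> R" unfolding R_def using nn by (intro sum_mono2 sum_nonneg) auto
        finally show ?thesis .
      qed
      then have "1.44 * \<tau> * Q \<le> 1.44 * \<tau> * R" using tau_pos by simp
      finally show ?thesis unfolding C_def R_def b_def by simp
    qed
    finally show ?thesis .
  qed
  have phi0: "0 \<le> \<phi> s" for s
    unfolding \<phi>_def by (rule integral_nonneg_AE) (use F_bd in auto)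
  have "AE \<omega> in M. real_cond_exp M G f \<omega> = \<phi> (W \<omega>)"
  proof -
    have Wsp: "W \<in> space M \<rightarrow> space (PiM UNIV (\<lambda>_. count_space UNIV))"
      using W_meas by (simp add: measurable_def)
    have setsG: "sets G = {W -` B \<inter> space M | B. B \<in> sets (PiM UNIV (\<lambda>_. count_space UNIV))}"
      unfolding G_def by (rule sets_vimage_algebra2[OF Wsp])
    have subalg: "subalgebra M G"
      unfolding subalgebra_def
    proof
      show "sets G \<subseteq> sets M" unfolding setsG using measurable_sets[OF W_meas] by blast
      show "space G = space M" by (simp add: G_def)
    qed
    interpret S: finite_measure_subalgebra M G
      by (intro finite_measure_subalgebra.intro finite_measure_axioms)
         (simp add: finite_measure_subalgebra_axioms_def subalg)
    have f_meas: "f \<in> borel_measurable M"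
    proof -
      have "(\<lambda>\<omega>. F (enc (W \<omega>), \<Gamma> \<omega>)) \<in> borel_measurable M" by measurable
      then show ?thesis using measurable_cong[of M f "\<lambda>\<omega>. F (enc (W \<omega>), \<Gamma> \<omega>)" borel] FEQ by simp
    qed
    have f_int: "integrable M f"
      by (rule integrable_const_bound[where B=Bd]) (use f_meas FEQ F_bd in \<open>auto intro!: AE_I2\<close>)
    have phim: "\<phi> \<in> borel_measurable (PiM UNIV (\<lambda>_. count_space UNIV))"
      by (rule meas_count) simp
    have WG: "W \<in> measurable G (PiM UNIV (\<lambda>_. count_space UNIV))"
      unfolding G_def by (rule measurable_vimage_algebra1[OF Wsp])
    have gG: "(\<lambda>\<omega>. \<phi> (W \<omega>)) \<in> borel_measurable G"
      using measurable_compose[OF WG phim] .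
    have gM: "(\<lambda>\<omega>. \<phi> (W \<omega>)) \<in> borel_measurable M"
      using measurable_compose[OF W_meas phim] .
    have g_int: "integrable M (\<lambda>\<omega>. \<phi> (W \<omega>))"
      by (rule integrable_const_bound[where B=C]) (use gM KEY phi0 in \<open>auto intro!: AE_I2\<close>)
    have inj_enc: "inj enc"
    proof (rule injI)
      fix s t assume "enc s = enc t"
      then have "fst (enc s i) = fst (enc t i)" for i by simp
      then have "(if s i then 1 else 0) = (if t i then 1 else (0::real))" for i by (simp add: enc_def)
      then have "s i = t i" for i by (metis zero_neq_one)
      then show "s = t" by (simp add: fun_eq_iff)
    qed
    show ?thesis
    proof (rule S.real_cond_exp_charact)
      fix A assume "A \<in> sets G"
      then obtain B where AB: "A = W -` B \<inter> space M" unfolding setsG by blast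
      have finB: "finite B" by (rule finite_subset[OF subset_UNIV]) simp
      have EB[measurable]: "enc ` B \<in> sets PB" unfolding PB_def using finB by (intro finite_sets_borelPi) simp
      define h where "h z = indicator (enc ` B) (fst z) * F z" for z
      have hm: "h \<in> borel_measurable (PB \<Otimes>\<^sub>M PB)" unfolding h_def[abs_def] by measurable
      have hb: "\<bar>h z\<bar> \<le> Bd" for z using F_bd[of z] by (auto simp: h_def indicator_def)
      have indA: "indicator A \<omega> = (indicator (enc ` B) (enc (W \<omega>)) :: real)" if "\<omega> \<in> space M" for \<omega>
        using that inj_image_mem_iff[OF inj_enc] by (auto simp: AB indicator_def)
      have "(\<integral>x\<in>A. f x \<partial>M) = (\<integral>\<omega>. h (enc (W \<omega>), \<Gamma> \<omega>) \<partial>M)"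
        unfolding set_lebesgue_integral_def
        by (rule Bochner_Integration.integral_cong[OF refl]) (simp add: indA FEQ h_def)
      also have "\<dots> = (\<integral>\<omega>. (\<integral>\<omega>'. h (enc (W \<omega>), \<Gamma> \<omega>') \<partial>M) \<partial>M)"
        by (rule freeze(3)[OF prob_space_axioms INDEP hm hb])
      also have "\<dots> = (\<integral>x\<in>A. \<phi> (W x) \<partial>M)"
        unfolding set_lebesgue_integral_def
        by (rule Bochner_Integration.integral_cong[OF refl]) (simp add: indA h_def \<phi>_def)
      finally show "(\<integral>x\<in>A. f x \<partial>M) = (\<integral>x\<in>A. \<phi> (W x) \<partial>M)" .
    qed (use f_int g_int gG in auto)
  qed
  then have "AE \<omega> in M. real_cond_exp M G f \<omega> \<le> C"
    by eventually_elim (use KEY in auto)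
  then show ?thesis unfolding f_def G_def C_def W_def .
qed

end
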